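(* Consider the SDP pair and one-step ADMM of the context (with $\mathcal A$ surjective and nonempty KKT set). For every $k\in\mathbb N$, $$\|Z^{(k+1)}-Z^{(k)}\|_F^2=\|\mathcal P(X^{(k)}-\widetilde X)\|_F^2+\sigma^2\|\mathcal P^\perp(S^{(k)}-C)\|_F^2,$$ where $\widetilde X\in\mathbb S^n$ is an arbitrary matrix with $\mathcal A\widetilde X=b$, and $$\|Z^{(k+1)}-Z^{(k)}\|_F^2\le\operatorname{dist}^2(Z^{(k)},\mathcal Z_\star)-\operatorname{dist}^2(Z^{(k+1)},\mathcal Z_\star).$$
   Context: $\mathbb S^n$: real symmetric matrices, trace inner product, Frobenius norm; $\Pi_{\mathbb S^n_+}$ projection onto the PSD cone; $\operatorname{dist}(Z,\mathcal S)=\inf_{W\in\mathcal S}\|Z-W\|_F$. SDP pair: min $\langle C,X\rangle$ s.t. $\mathcal AX=b$, $X\succeq0$ / max $b^\top y$ s.t. $\mathcal A^*y+S=C$, $S\succeq0$, with $C,A_i\in\mathbb S^n$, $\mathcal AX=(\langle A_i,X\rangle)_i$ surjective, $\mathcal A^*y=\sum y_iA_i$, KKT set nonempty. $\mathcal P=\mathcal A^*(\mathcal A\mathcal A^* )^{-1}\mathcal A$, $\mathcal P^\perp=\mathrm{Id}-\mathcal P$. For $\sigma>0$ and $Z^{(0)}\in\mathbb S^n$: $Z^{(k+1)}=\mathcal P(-2\Pi_{\mathbb S^n_+}(Z^{(k)})+Z^{(k)})+\Pi_{\mathbb S^n_+}(Z^{(k)})+\mathcal A^*(\mathcal A\mathcal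 A^* )^{-1}b+\sigma\mathcal PC-\sigma C$, $X^{(k)}=\Pi_{\mathbb S^n_+}(Z^{(k)})$, $S^{(k)}=\sigma^{-1}\Pi_{\mathbb S^n_+}(-Z^{(k)})$. $\mathcal Z_\star$ is the set of fixed points of this iteration map. *)

theory Defs
  imports "HOL-Analysis.Analysis"
begin

text \<open>Matrices are elements of real^'n^'n. The HOL-Analysis norm on this type is the
Frobenius norm and the inner product is the trace inner product sum_ij A_ij B_ij.\<close>

definition sym_mats :: "(real^'n^'n) set" where
  "sym_mats = {X. transpose X = X}"

definition psd_cone :: "(real^'n^'n) set" where
  "psd_cone = {X. transpose X = X \<and> (\<forall>v. v \<bullet> (X *v v) \<ge> 0)}"

definition proj_psd :: "real^'n^'n \<Rightarrow> real^'n^'n" where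
  "proj_psd Z = closest_point psd_cone Z"

definition Aop :: "('m::finite \<Rightarrow> real^'n^'n) \<Rightarrow> real^'n^'n \<Rightarrow> real^'m" where
  "Aop A X = (\<chi> i. A i \<bullet> X)"

definition Aadj :: "('m::finite \<Rightarrow> real^'n^'n) \<Rightarrow> real^'m \<Rightarrow> real^'n^'n" where
  "Aadj A y = (\<Sum>i\<in>UNIV. (y $ i) *\<^sub>R A i)"

definition AAadj :: "('m::finite \<Rightarrow> real^'n^'n) \<Rightarrow> real^'m^'m" where
  "AAadj A = (\<chi> i j. A i \<bullet> A j)"

definition Pop :: "('m::finite \<Rightarrow> real^'n^'n) \<Rightarrow> real^'n^'n \<Rightarrow> real^'n^'n" where
  "Pop A Z = Aadj A (matrix_inv (AAadj A) *v Aop A Z)"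

definition Pperp :: "('m::finite \<Rightarrow> real^'n^'n) \<Rightarrow> real^'n^'n \<Rightarrow> real^'n^'n" where
  "Pperp A Z = Z - Pop A Z"

definition admm_step :: "('m::finite \<Rightarrow> real^'n^'n) \<Rightarrow> real^'m \<Rightarrow> real^'n^'n \<Rightarrow> real
    \<Rightarrow> real^'n^'n \<Rightarrow> real^'n^'n" where
  "admm_step A b C \<sigma> Z =
     Pop A (-(2 *\<^sub>R proj_psd Z) + Z) + proj_psd Z
     + Aadj A (matrix_inv (AAadj A) *v b) + \<sigma> *\<^sub>R Pop A C - \<sigma> *\<^sub>R C"

definition admm_fixpoints :: "('m::finite \<Rightarrow> real^'n^'n) \<Rightarrow> real^'m \<Rightarrow> real^'n^'n \<Rightarrow> real
    \<Rightarrow> (real^'n^'n) set" where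
  "admm_fixpoints A b C \<sigma> = {Z \<in> sym_mats. admm_step A b C \<sigma> Z = Z}"

definition kkt_set :: "('m::finite \<Rightarrow> real^'n^'n) \<Rightarrow> real^'m \<Rightarrow> real^'n^'n
    \<Rightarrow> ((real^'n^'n) \<times> (real^'m) \<times> (real^'n^'n)) set" where
  "kkt_set A b C = {(X, y, S). Aop A X = b \<and> X \<in> psd_cone \<and>
      Aadj A y + S = C \<and> S \<in> psd_cone \<and> X \<bullet> S = 0}"

end

theory Submission imports Defs begin

definition outer :: "real^'n \<Rightarrow> real^'n^'n" where
  "outer u = (\<chi> i j. u$i * u$j)"

lemma inner_outer: "(X::real^'n^'n) \<bullet> outer u = u \<bullet> (X *v u)"
  by (simp add: outer_def inner_vec_def matrix_vector_mult_def sum_distrib_left mult_ac)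

lemma quad_outer: "v \<bullet> (outer u *v v) = (u \<bullet> v)^2"
  by (simp add: outer_def inner_vec_def matrix_vector_mult_def sum_distrib_left
      power2_eq_square sum_product mult_ac)

lemma outer_psd: "outer u \<in> psd_cone"
  unfolding psd_cone_def by (simp add: quad_outer, simp add: transpose_def outer_def vec_eq_iff mult.commute)

lemma psd_sym: "X \<in> psd_cone \<Longrightarrow> transpose X = X"
  by (simp add: psd_cone_def)

lemma sym_quad: "transpose (W::real^'n^'n) = W \<Longrightarrow> x \<bullet> (W *v y) = y \<bullet> (W *v x)"
  by (metis dot_lmul_matrix inner_commute vector_transpose_matrix)

lemma axis_quad: "axis i 1 \<bullet> ((W::real^'n^'n) *v axis j 1) = W$i$j"
  by (simp add: matrix_vector_mult_basis inner_axis' column_def)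

lemma sym_entry: "transpose (W::real^'n^'n) = W \<Longrightarrow> W$i$k = W$k$i"
proof -
  assume "transpose W = W"
  moreover have "(transpose W)$i$k = W$k$i" by (simp add: transpose_def)
  ultimately show ?thesis by simp
qed

lemma col_entry: "((W::real^'n^'n) *v axis i 1)$k = W$k$i"
  by (simp add: matrix_vector_mult_basis column_def)

lemma quad_expand:
  assumes "transpose (W::real^'n^'n) = W"
  shows "(x + t *\<^sub>R y) \<bullet> (W *v (x + t *\<^sub>R y)) =
     x \<bullet> (W *v x) + 2 * t * (y \<bullet> (W *v x)) + t^2 * (y \<bullet> (W *v y))"
  using sym_quad[OF assms, of x y]
  by (simp add: algebra_simps inner_add_left inner_add_right power2_eq_square)

lemma lin_nonneg_zero:
  assumes "\<And>t::real. 0 \<le> a + 2 * t * b" shows "b = 0"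
proof (rule ccontr)
  assume "b \<noteq> 0"
  have "0 \<le> a + 2 * (-(\<bar>a\<bar>+1)/(2*b)) * b" by (rule assms)
  also have "\<dots> = a - \<bar>a\<bar> - 1" using \<open>b \<noteq> 0\<close> by (simp add: field_simps)
  finally show False by linarith
qed

lemma psd_quad: "W \<in> psd_cone \<Longrightarrow> 0 \<le> v \<bullet> (W *v v)"
  by (simp add: psd_cone_def)

lemma psd_zero_diag:
  assumes W: "W \<in> psd_cone" and d: "W$i$i = 0"
  shows "W$i = 0"
proof -
  define c where "c = W *v axis i 1"
  have sym: "transpose W = W" using W by (simp add: psd_cone_def)
  have "x \<bullet> c = 0" for x
  proof (rule lin_nonneg_zero[of "x \<bullet> (W *v x)"])
    fix t :: real
    have "0 \<le> (x + t *\<^sub>R axis i 1) \<bullet> (W *v (x + t *\<^sub>R axis i 1))"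
      by (rule psd_quad[OF W])
    also have "\<dots> = x \<bullet> (W *v x) + 2 * t * (x \<bullet> c)"
      unfolding quad_expand[OF sym] axis_quad d c_def using sym_quad[OF sym, of "axis i 1" x]
      by simp
    finally show "0 \<le> x \<bullet> (W *v x) + 2 * t * (x \<bullet> c)" .
  qed
  then have "c = 0" using inner_eq_zero_iff by blast
  then have "W$k$i = 0" for k
    using col_entry[of W i k] \<open>c = 0\<close> unfolding c_def by simp
  then have "W$i$k = 0" for k
    using sym_entry[OF sym, of i k] by simp
  then show ?thesis by (simp add: vec_eq_iff)
qed

lemma psd_self_dual_aux:
  fixes P :: "real^'n^'n"
  assumes P: "P \<in> psd_cone" and I: "finite I"
  shows "\<forall>W. W \<in> psd_cone \<longrightarrow> (\<forall>j. j \<notin> I \<longrightarrow> W$j = 0) \<longrightarrow> 0 \<le> P \<bullet> W"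
  using I
proof (induction I rule: finite_induct)
  case empty
  show ?case
  proof (intro allI impI)
    fix W :: "real^'n^'n"
    assume "\<forall>j. j \<notin> {} \<longrightarrow> W$j = 0"
    then have "W = 0" by (simp add: vec_eq_iff)
    then show "0 \<le> P \<bullet> W" by simp
  qed
next
  case (insert i I)
  show ?case
  proof (intro allI impI)
    fix W :: "real^'n^'n"
    assume W: "W \<in> psd_cone" and Z: "\<forall>j. j \<notin> insert i I \<longrightarrow> W$j = 0"
    have sym: "transpose W = W" using W by (simp add: psd_cone_def)
    show "0 \<le> P \<bullet> W"
    proof (cases "W$i$i = 0")
      case True
      then have "W$i = 0" using psd_zero_diag[OF W] by blast
      then have "\<forall>j. j \<notin> I \<longrightarrow> W$j = 0" using Z by auto
      then show ?thesis using insert.IH W by blast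
    next
      case False
      define w where "w = W$i$i"
      have "0 \<le> w" unfolding w_def using psd_quad[OF W, of "axis i 1"] axis_quad by metis
      with False have wpos: "0 < w" unfolding w_def by simp
      define c where "c = W *v axis i 1"
      have ck: "c$k = W$k$i" for k
        unfolding c_def by (rule col_entry)
      have cki: "c$k = W$i$k" for k
        using sym_entry[OF sym, of i k] ck by simp
      define W' where "W' = W - (1/w) *\<^sub>R outer c"
      have cx: "c \<bullet> x = axis i 1 \<bullet> (W *v x)" for x
        unfolding c_def using sym_quad[OF sym, of "axis i 1" x] by (simp add: inner_commute)
      have W'sym: "transpose W' = W'"
        using sym unfolding W'_def
        by (simp add: transpose_def outer_def vec_eq_iff mult.commute)
      have W'q: "0 \<le> x \<bullet> (W' *v x)" for x
      proof -
        define t where "t = - (c \<bullet> x) / w"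
        have "0 \<le> (x + t *\<^sub>R axis i 1) \<bullet> (W *v (x + t *\<^sub>R axis i 1))"
          by (rule psd_quad[OF W])
        also have "\<dots> = x \<bullet> (W *v x) + 2 * t * (c \<bullet> x) + t^2 * w"
          unfolding quad_expand[OF sym] axis_quad w_def cx by simp
        also have "\<dots> = x \<bullet> (W *v x) - (c \<bullet> x)^2 / w"
          using wpos unfolding t_def by (simp add: field_simps power2_eq_square)
        also have "\<dots> = x \<bullet> (W' *v x)"
          unfolding W'_def by (simp add: algebra_simps scaleR_matrix_vector_assoc[symmetric] quad_outer)
        finally show ?thesis .
      qed
      have W'psd: "W' \<in> psd_cone" using W'sym W'q by (simp add: psd_cone_def)
      have W'z: "\<forall>j. j \<notin> I \<longrightarrow> W'$j = 0"
      proof (intro allI impI)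
        fix j assume j: "j \<notin> I"
        show "W'$j = 0"
        proof (cases "j = i")
          case True
          then show ?thesis using wpos unfolding W'_def
            by (simp add: vec_eq_iff outer_def cki w_def)
        next
          case False
          then have "W$j = 0" using Z j by auto
          then show ?thesis unfolding W'_def
            by (simp add: vec_eq_iff outer_def ck)
        qed
      qed
      have "0 \<le> P \<bullet> W'" using insert.IH W'psd W'z by blast
      moreover have "0 \<le> P \<bullet> outer c" unfolding inner_outer by (rule psd_quad[OF P])
      moreover have "P \<bullet> W = P \<bullet> W' + (1/w) * (P \<bullet> outer c)"
        unfolding W'_def by (simp add: inner_diff_right)
      ultimately show ?thesis using wpos by simp
    qed
  qed
qed

lemma psd_self_dual:
  fixes P W :: "real^'n^'n"
  assumes "P \<in> psd_cone" "W \<in> psd_cone"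
  shows "0 \<le> P \<bullet> W"
  using psd_self_dual_aux[OF assms(1), of UNIV] assms(2) by simp


lemma psd_closed: "closed (psd_cone :: (real^'n^'n) set)"
proof -
  have eq: "psd_cone = (\<Inter>i. \<Inter>j. {X::real^'n^'n. (axis i (axis j 1) - axis j (axis i 1)) \<bullet> X = 0})
       \<inter> (\<Inter>v. {X. outer v \<bullet> X \<ge> 0})"
  proof (intro set_eqI iffI)
    fix X :: "real^'n^'n"
    assume "X \<in> psd_cone"
    then show "X \<in> (\<Inter>i. \<Inter>j. {X::real^'n^'n. (axis i (axis j 1) - axis j (axis i 1)) \<bullet> X = 0})
       \<inter> (\<Inter>v. {X. outer v \<bullet> X \<ge> 0})"
      using sym_entry[of X] psd_quad[of X]
      by (auto simp: inner_diff_left inner_axis' inner_commute[of "outer _"] inner_outer psd_cone_def)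
  next
    fix X :: "real^'n^'n"
    assume X: "X \<in> (\<Inter>i. \<Inter>j. {X::real^'n^'n. (axis i (axis j 1) - axis j (axis i 1)) \<bullet> X = 0})
       \<inter> (\<Inter>v. {X. outer v \<bullet> X \<ge> 0})"
    then have "X$i$j = X$j$i" for i j
      by (auto simp: inner_diff_left inner_axis')
    then have "transpose X = X" by (simp add: transpose_def vec_eq_iff)
    moreover have "0 \<le> v \<bullet> (X *v v)" for v
      using X by (auto simp: inner_commute[of "outer _"] inner_outer)
    ultimately show "X \<in> psd_cone" by (simp add: psd_cone_def)
  qed
  show ?thesis unfolding eq
    by (intro closed_Int closed_INT ballI closed_hyperplane closed_halfspace_ge)
qed

lemma psd_add: "X \<in> psd_cone \<Longrightarrow> Y \<in> psd_cone \<Longrightarrow> X + Y \<in> psd_cone"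
  unfolding psd_cone_def
  by (auto simp: transpose_def vec_eq_iff algebra_simps inner_add_right intro: add_nonneg_nonneg)

lemma psd_scale: "X \<in> psd_cone \<Longrightarrow> 0 \<le> c \<Longrightarrow> c *\<^sub>R X \<in> psd_cone"
proof -
  assume X: "X \<in> psd_cone" and c: "0 \<le> c"
  have "transpose (c *\<^sub>R X) = c *\<^sub>R X"
    using psd_sym[OF X] by (simp add: transpose_def vec_eq_iff sym_entry[OF psd_sym[OF X]])
  moreover have "0 \<le> v \<bullet> ((c *\<^sub>R X) *v v)" for v
    using psd_quad[OF X, of v] c by (simp add: scaleR_matrix_vector_assoc[symmetric])
  ultimately show ?thesis by (simp add: psd_cone_def)
qed

lemma psd_zero: "0 \<in> psd_cone"
  by (simp add: psd_cone_def transpose_def vec_eq_iff)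

lemma psd_convex: "convex (psd_cone :: (real^'n^'n) set)"
  unfolding convex_def using psd_add psd_scale by blast

lemma proj_in: "proj_psd Z \<in> psd_cone"
  unfolding proj_psd_def using closest_point_in_set[OF psd_closed] psd_zero by blast

lemma proj_dot: "W \<in> psd_cone \<Longrightarrow> (Z - proj_psd Z) \<bullet> (W - proj_psd Z) \<le> 0"
  unfolding proj_psd_def by (rule closest_point_dot[OF psd_convex psd_closed])

lemma proj_orth: "(Z - proj_psd Z) \<bullet> proj_psd Z = 0"
proof -
  have "(Z - proj_psd Z) \<bullet> (0 - proj_psd Z) \<le> 0" by (rule proj_dot[OF psd_zero])
  moreover have "(Z - proj_psd Z) \<bullet> (2 *\<^sub>R proj_psd Z - proj_psd Z) \<le> 0"
    by (rule proj_dot[OF psd_scale[OF proj_in]]) simp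
  ultimately show ?thesis by (simp add: inner_diff_right algebra_simps)
qed

lemma proj_normal: "W \<in> psd_cone \<Longrightarrow> (Z - proj_psd Z) \<bullet> W \<le> 0"
proof -
  assume W: "W \<in> psd_cone"
  have "(Z - proj_psd Z) \<bullet> ((W + proj_psd Z) - proj_psd Z) \<le> 0"
    by (rule proj_dot[OF psd_add[OF W proj_in]])
  then show ?thesis by simp
qed

lemma proj_unique:
  assumes x: "x \<in> psd_cone" and v: "\<And>W. W \<in> psd_cone \<Longrightarrow> (a - x) \<bullet> (W - x) \<le> 0"
  shows "proj_psd a = x"
proof -
  have "dist a x \<le> dist a z" if z: "z \<in> psd_cone" for z
  proof -
    have e: "a - z = (a - x) - (z - x)" by simp
    have "(a - x) \<bullet> (a - x) \<le> (a - z) \<bullet> (a - z)"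
      unfolding e using v[OF z]
      by (simp add: inner_diff_left inner_diff_right inner_commute[of "z - x"] algebra_simps)
        (smt (verit) inner_ge_zero inner_diff_left inner_diff_right inner_commute)
    then show ?thesis by (simp add: dist_norm norm_le)
  qed
  then show ?thesis unfolding proj_psd_def
    using closest_point_unique[OF psd_convex psd_closed x] by metis
qed

lemma moreau:
  fixes Z :: "real^'n^'n"
  assumes sym: "transpose Z = Z"
  shows "proj_psd (- Z) = proj_psd Z - Z"
proof (rule proj_unique)
  let ?X = "proj_psd Z"
  have sX: "transpose ?X = ?X" using psd_sym[OF proj_in] .
  have "transpose (?X - Z) = ?X - Z"
    using sX sym by (simp add: transpose_def vec_eq_iff sym_entry[OF sX] sym_entry[OF sym])
  moreover have "0 \<le> v \<bullet> ((?X - Z) *v v)" for v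
    using proj_normal[OF outer_psd, of Z v]
    by (simp add: inner_outer[symmetric] inner_diff_left)
  ultimately show "?X - Z \<in> psd_cone" by (simp add: psd_cone_def)
  fix W :: "real^'n^'n" assume W: "W \<in> psd_cone"
  have "(- Z - (?X - Z)) \<bullet> (W - (?X - Z)) = - (?X \<bullet> W) - (Z - ?X) \<bullet> ?X"
    by (simp add: inner_diff_left inner_diff_right inner_commute algebra_simps)
  also have "\<dots> = - (?X \<bullet> W)" using proj_orth[of Z] by simp
  also have "\<dots> \<le> 0" using psd_self_dual[OF proj_in W] by simp
  finally show "(- Z - (?X - Z)) \<bullet> (W - (?X - Z)) \<le> 0" .
qed


lemma Aop_add: "Aop A (X + Y) = Aop A X + Aop A Y"
  by (simp add: Aop_def vec_eq_iff inner_add_right)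
lemma Aop_diff: "Aop A (X - Y) = Aop A X - Aop A Y"
  by (simp add: Aop_def vec_eq_iff inner_diff_right)
lemma Aop_scale: "Aop A (c *\<^sub>R X) = c *\<^sub>R Aop A X"
  by (simp add: Aop_def vec_eq_iff)
lemma Aadj_add: "Aadj A (x + y) = Aadj A x + Aadj A y"
  by (simp add: Aadj_def scaleR_add_left sum.distrib)
lemma Aadj_scale: "Aadj A (c *\<^sub>R x) = c *\<^sub>R Aadj A x"
  by (simp add: Aadj_def scaleR_sum_right)
lemma Aadj_inner: "Aadj A y \<bullet> W = y \<bullet> Aop A W"
proof -
  have "Aadj A y \<bullet> W = (\<Sum>i\<in>UNIV. y$i * (A i \<bullet> W))" by (simp add: Aadj_def inner_sum_left)
  also have "\<dots> = y \<bullet> Aop A W" unfolding Aop_def by (simp add: inner_vec_def[of y])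
  finally show ?thesis .
qed
lemma Aop_Aadj: "Aop A (Aadj A y) = AAadj A *v y"
  by (simp add: Aadj_def Aop_def AAadj_def vec_eq_iff matrix_vector_mult_def inner_sum_right mult.commute)
lemma AAadj_sym: "transpose (AAadj A) = AAadj A"
  by (simp add: AAadj_def transpose_def vec_eq_iff inner_commute)
lemma Aadj_sym:
  assumes "\<And>i. A i \<in> sym_mats" shows "Aadj A y \<in> sym_mats"
proof -
  have "transpose (A i) = A i" for i using assms by (simp add: sym_mats_def)
  then have "(A i)$j$k = (A i)$k$j" for i j k using sym_entry by metis
  then show ?thesis
    by (simp add: sym_mats_def Aadj_def transpose_def vec_eq_iff sum_component)
qed

lemma gram_inv:
  assumes surj: "\<forall>c. \<exists>X\<in>sym_mats. Aop A X = c"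
  shows "AAadj A ** matrix_inv (AAadj A) = mat 1 \<and> matrix_inv (AAadj A) ** AAadj A = mat 1"
proof -
  let ?G = "AAadj A"
  have z: "y = 0" if "?G *v y = 0" for y
  proof -
    have "Aadj A y \<bullet> Aadj A y = y \<bullet> (?G *v y)" by (simp add: Aadj_inner Aop_Aadj)
    then have "Aadj A y = 0" using that by simp
    obtain X where "Aop A X = y" using surj by blast
    then have "y \<bullet> y = Aadj A y \<bullet> X" by (simp add: Aadj_inner)
    then show "y = 0" using \<open>Aadj A y = 0\<close> by simp
  qed
  have "inj ((*v) ?G)"
  proof (rule injI)
    fix x y assume "?G *v x = ?G *v y"
    then have "?G *v (x - y) = 0" by (simp add: matrix_vector_mult_diff_distrib)
    then show "x = y" using z by fastforce
  qed
  then have "invertible ?G"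
    using invertible_left_inverse matrix_left_invertible_injective by blast
  then show ?thesis unfolding invertible_def matrix_inv_def by (rule someI_ex)
qed


lemma Pop_add: "Pop A (X + Y) = Pop A X + Pop A Y"
  by (simp add: Pop_def Aop_add matrix_vector_right_distrib Aadj_add)
lemma Pop_scale: "Pop A (c *\<^sub>R X) = c *\<^sub>R Pop A X"
  by (simp add: Pop_def Aop_scale matrix_vector_mult_scaleR Aadj_scale)
lemma Pop_diff: "Pop A (X - Y) = Pop A X - Pop A Y"
  using Pop_add[of A "X - Y" Y] by simp
lemma Pop_minus: "Pop A (- X) = - Pop A X"
  using Pop_scale[of A "-1" X] by simp

lemma Pop_sym: "(\<And>i. A i \<in> sym_mats) \<Longrightarrow> Pop A X \<in> sym_mats"
  unfolding Pop_def by (rule Aadj_sym)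

context
  fixes A :: "'m::finite \<Rightarrow> real^'n^'n"
  assumes surj: "\<forall>c. \<exists>X\<in>sym_mats. Aop A X = c"
begin

lemma Pop_Aadj: "Pop A (Aadj A y) = Aadj A y"
proof -
  have "matrix_inv (AAadj A) *v (AAadj A *v y) = y"
    using gram_inv[OF surj] by (simp add: matrix_vector_mul_assoc)
  then show ?thesis by (simp add: Pop_def Aop_Aadj)
qed

lemma Pop_idem: "Pop A (Pop A X) = Pop A X"
  by (metis Pop_Aadj Pop_def)

lemma Aop_Pop: "Aop A (Pop A X) = Aop A X"
  using gram_inv[OF surj] by (simp add: Pop_def Aop_Aadj matrix_vector_mul_assoc)

lemma Pop_sa: "Pop A Y \<bullet> W = Y \<bullet> Pop A W"
proof -
  let ?G = "AAadj A" and ?H = "matrix_inv (AAadj A)"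
  have GH: "?G *v (?H *v v) = v" for v
    using gram_inv[OF surj] by (simp add: matrix_vector_mul_assoc)
  have "Pop A Y \<bullet> W = (?H *v Aop A Y) \<bullet> Aop A W" by (simp add: Pop_def Aadj_inner)
  also have "\<dots> = (?H *v Aop A Y) \<bullet> (?G *v (?H *v Aop A W))" by (simp add: GH)
  also have "\<dots> = (?H *v Aop A W) \<bullet> (?G *v (?H *v Aop A Y))"
    by (rule sym_quad[OF AAadj_sym])
  also have "\<dots> = (?H *v Aop A W) \<bullet> Aop A Y" by (simp add: GH)
  also have "\<dots> = Y \<bullet> Pop A W" by (simp add: Pop_def inner_commute[of Y] Aadj_inner)
  finally show ?thesis .
qed

lemma PQ_orth: "Pop A X \<bullet> Pperp A Y = 0"
  by (simp add: Pperp_def inner_diff_right Pop_sa Pop_idem)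

lemma P_norm: "Pop A X \<bullet> X = (norm (Pop A X))^2"
  by (metis Pop_idem Pop_sa power2_norm_eq_inner)

lemma Q_norm: "Pperp A X \<bullet> X = (norm (Pperp A X))^2"
proof -
  have "(norm (Pperp A X))^2 = Pperp A X \<bullet> (X - Pop A X)"
    by (simp add: power2_norm_eq_inner Pperp_def)
  also have "\<dots> = Pperp A X \<bullet> X" using PQ_orth[of X X]
    by (simp add: inner_diff_right inner_commute)
  finally show ?thesis by simp
qed

lemma PQ_pyth: "(norm (Pop A X + Pperp A Y))^2 = (norm (Pop A X))^2 + (norm (Pperp A Y))^2"
  by (rule norm_add_Pythagorean) (simp add: orthogonal_def PQ_orth)

lemma step_form:
  "admm_step A b C \<sigma> Z = Pop A (Z - proj_psd Z) + Pperp A (proj_psd Z)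
     + (Aadj A (matrix_inv (AAadj A) *v b) + \<sigma> *\<^sub>R Pop A C - \<sigma> *\<^sub>R C)"
proof -
  let ?X = "proj_psd Z"
  have e: "-(2 *\<^sub>R ?X) + Z = (Z - ?X) - ?X" by (simp add: algebra_simps scaleR_2)
  have "Pop A (-(2 *\<^sub>R ?X) + Z) = Pop A ((Z - ?X) - ?X)" by (simp only: e)
  also have "\<dots> = Pop A (Z - ?X) - Pop A ?X" by (rule Pop_diff)
  finally have "Pop A (-(2 *\<^sub>R ?X) + Z) = Pop A (Z - ?X) - Pop A ?X" .
  then show ?thesis by (simp add: admm_step_def Pperp_def algebra_simps)
qed

lemma firm:
  "(norm (admm_step A b C \<sigma> Z1 - admm_step A b C \<sigma> Z2))^2
     \<le> (admm_step A b C \<sigma> Z1 - admm_step A b C \<sigma> Z2) \<bullet> (Z1 - Z2)"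
proof -
  define X1 where "X1 = proj_psd Z1"
  define X2 where "X2 = proj_psd Z2"
  define dN where "dN = (X1 - Z1) - (X2 - Z2)"
  define dX where "dX = X1 - X2"
  define p where "p = Pop A dN"
  define q where "q = Pperp A dX"
  have u: "admm_step A b C \<sigma> Z1 - admm_step A b C \<sigma> Z2 = Pop A (- dN) + q"
  proof -
    have "Pop A (Z1 - X1) - Pop A (Z2 - X2) = Pop A (- dN)"
      unfolding dN_def by (simp add: Pop_diff[symmetric] algebra_simps)
    moreover have "Pperp A X1 - Pperp A X2 = q"
      unfolding q_def dX_def Pperp_def by (simp add: Pop_diff algebra_simps)
    ultimately show ?thesis unfolding step_form X1_def X2_def by (simp add: algebra_simps)
  qed
  have u2: "Pop A (- dN) + q = - p + q" by (simp add: Pop_minus p_def)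
  have nu: "(norm (- p + q))^2 = (norm p)^2 + (norm q)^2"
    using PQ_pyth[of "- dN" dX] unfolding p_def q_def by (simp add: Pop_minus)
  have d: "Z1 - Z2 = dX - dN" unfolding dX_def dN_def by (simp add: algebra_simps)
  have pN: "p \<bullet> dN = (norm p)^2" unfolding p_def by (rule P_norm)
  have qX: "q \<bullet> dX = (norm q)^2" unfolding q_def by (rule Q_norm)
  have cross: "p \<bullet> dX + q \<bullet> dN = dN \<bullet> dX"
  proof -
    have "p \<bullet> dX + q \<bullet> dN = dN \<bullet> Pop A dX + dN \<bullet> Pperp A dX"
      unfolding p_def q_def Pop_sa by (simp add: inner_commute[of "Pperp A dX"])
    also have "\<dots> = dN \<bullet> dX" by (simp add: Pperp_def inner_diff_right)
    finally show ?thesis .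
  qed
  have neg: "dN \<bullet> dX \<le> 0"
  proof -
    have a: "(X1 - Z1) \<bullet> X1 = 0" using proj_orth[of Z1] unfolding X1_def
      by (simp add: inner_diff_left)
    have b: "(X2 - Z2) \<bullet> X2 = 0" using proj_orth[of Z2] unfolding X2_def
      by (simp add: inner_diff_left)
    have c: "0 \<le> (X1 - Z1) \<bullet> X2" using proj_normal[OF proj_in, of Z1 Z2] unfolding X1_def X2_def
      by (simp add: inner_diff_left)
    have e: "0 \<le> (X2 - Z2) \<bullet> X1" using proj_normal[OF proj_in, of Z2 Z1] unfolding X1_def X2_def
      by (simp add: inner_diff_left)
    have "dN \<bullet> dX = (X1 - Z1) \<bullet> X1 - (X1 - Z1) \<bullet> X2 - (X2 - Z2) \<bullet> X1 + (X2 - Z2) \<bullet> X2"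
      unfolding dN_def dX_def by (simp add: inner_diff_left inner_diff_right)
    then show ?thesis using a b c e by linarith
  qed
  have "(- p + q) \<bullet> (dX - dN) = - (p \<bullet> dX) + p \<bullet> dN + q \<bullet> dX - q \<bullet> dN"
    by (simp add: inner_diff_right inner_add_left algebra_simps)
  then have "(- p + q) \<bullet> (dX - dN) = (norm p)^2 + (norm q)^2 - dN \<bullet> dX"
    using pN qX cross by linarith
  then show ?thesis unfolding u u2 d nu using neg by linarith
qed


lemma fix_ineq:
  assumes Zs: "Zs \<in> admm_fixpoints A b C \<sigma>"
  shows "(norm (admm_step A b C \<sigma> Z - Z))^2 \<le> (norm (Z - Zs))^2 - (norm (admm_step A b C \<sigma> Z - Zs))^2"
proof -
  have T: "admm_step A b C \<sigma> Zs = Zs" using Zs by (simp add: admm_fixpoints_def)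
  define u where "u = admm_step A b C \<sigma> Z - Zs"
  define d where "d = Z - Zs"
  have f: "(norm u)^2 \<le> u \<bullet> d" using firm[of b C \<sigma> Z Zs] unfolding T u_def d_def .
  have "admm_step A b C \<sigma> Z - Z = u - d" unfolding u_def d_def by simp
  moreover have "(norm (u - d))^2 = (norm u)^2 - 2 * (u \<bullet> d) + (norm d)^2"
    by (simp add: power2_norm_eq_inner inner_diff_left inner_diff_right inner_commute)
  ultimately show ?thesis using f unfolding u_def[symmetric] d_def[symmetric] by simp
qed

lemma fix_nonempty:
  assumes kkt: "kkt_set A b C \<noteq> {}" and sigma: "\<sigma> > 0"
  shows "admm_fixpoints A b C \<sigma> \<noteq> {}"
proof -
  obtain X y S where X: "Aop A X = b" "X \<in> psd_cone" and S: "Aadj A y + S = C" "S \<in> psd_cone"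
    and XS: "X \<bullet> S = 0"
    using kkt unfolding kkt_set_def by auto
  define Zs where "Zs = X - \<sigma> *\<^sub>R S"
  have pX: "proj_psd Zs = X"
  proof (rule proj_unique[OF X(2)])
    fix W :: "real^'n^'n" assume W: "W \<in> psd_cone"
    have "(Zs - X) \<bullet> (W - X) = - \<sigma> * (S \<bullet> W) + \<sigma> * (X \<bullet> S)"
      unfolding Zs_def by (simp add: inner_diff_right inner_commute algebra_simps)
    also have "\<dots> \<le> 0" using XS sigma psd_self_dual[OF S(2) W] by simp
    finally show "(Zs - X) \<bullet> (W - X) \<le> 0" .
  qed
  have PX: "Aadj A (matrix_inv (AAadj A) *v b) = Pop A X" using X(1) by (simp add: Pop_def)
  have Sy: "S = C - Aadj A y" using S(1) by (simp add: algebra_simps)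
  have PS: "Pop A S = Pop A C - Aadj A y" unfolding Sy by (simp add: Pop_diff Pop_Aadj)
  have "admm_step A b C \<sigma> Zs = Pop A (- (\<sigma> *\<^sub>R S)) + (X - Pop A X) + (Pop A X + \<sigma> *\<^sub>R Pop A C - \<sigma> *\<^sub>R C)"
    unfolding step_form pX PX Pperp_def by (simp add: Zs_def)
  also have "\<dots> = Zs"
    unfolding Pop_minus Pop_scale PS by (simp add: Zs_def Sy algebra_simps)
  finally have "admm_step A b C \<sigma> Zs = Zs" .
  moreover have "Zs \<in> sym_mats"
    using psd_sym[OF X(2)] psd_sym[OF S(2)] unfolding Zs_def sym_mats_def
    by (simp add: transpose_def vec_eq_iff sym_entry[OF psd_sym[OF X(2)]] sym_entry[OF psd_sym[OF S(2)]])
  ultimately show ?thesis unfolding admm_fixpoints_def by blast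
qed

lemma part1:
  fixes Z :: "real^'n^'n"
  assumes sym: "transpose Z = Z" and sigma: "\<sigma> > 0" and Xt: "Aop A Xt = b"
  shows "(norm (admm_step A b C \<sigma> Z - Z))\<^sup>2 =
              (norm (Pop A (proj_psd Z - Xt)))\<^sup>2
              + \<sigma>\<^sup>2 * (norm (Pperp A ((1 / \<sigma>) *\<^sub>R proj_psd (- Z) - C)))\<^sup>2"
proof -
  define X where "X = proj_psd Z"
  define Y where "Y = (1 / \<sigma>) *\<^sub>R proj_psd (- Z) - C"
  have sY: "\<sigma> *\<^sub>R Y = (X - Z) - \<sigma> *\<^sub>R C"
    using sigma unfolding Y_def X_def moreau[OF sym] by (simp add: algebra_simps)
  have PXt: "Aadj A (matrix_inv (AAadj A) *v b) = Pop A Xt" using Xt by (simp add: Pop_def)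
  have "admm_step A b C \<sigma> Z - Z = Pop A (- (X - Xt)) + Pperp A (\<sigma> *\<^sub>R Y)"
    unfolding step_form Pperp_def sY PXt X_def[symmetric]
    by (simp add: Pop_diff Pop_add Pop_minus Pop_scale algebra_simps)
  then have "(norm (admm_step A b C \<sigma> Z - Z))\<^sup>2 = (norm (Pop A (- (X - Xt))))^2 + (norm (Pperp A (\<sigma> *\<^sub>R Y)))^2"
    using PQ_pyth by simp
  also have "\<dots> = (norm (Pop A (X - Xt)))\<^sup>2 + \<sigma>\<^sup>2 * (norm (Pperp A Y))\<^sup>2"
    using sigma by (simp add: Pop_minus Pop_diff norm_minus_commute Pperp_def Pop_scale scaleR_diff_right[symmetric] power_mult_distrib)
  finally show ?thesis unfolding X_def Y_def .
qed

end

lemma sym_iff: "X \<in> sym_mats \<longleftrightarrow> (\<forall>i j. (X::real^'n^'n)$i$j = X$j$i)"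
  by (auto simp: sym_mats_def transpose_def vec_eq_iff)

lemma step_sym:
  assumes symA: "\<And>i. A i \<in> sym_mats" and symC: "C \<in> sym_mats"
  shows "admm_step A b C \<sigma> Z \<in> sym_mats"
proof -
  have "Pop A W \<in> sym_mats" for W by (rule Pop_sym[OF symA])
  moreover have "proj_psd Z \<in> sym_mats" using psd_sym[OF proj_in] by (simp add: sym_mats_def)
  moreover have "Aadj A v \<in> sym_mats" for v by (rule Aadj_sym[OF symA])
  ultimately show ?thesis using symC unfolding admm_step_def sym_iff by simp
qed

theorem lemma4:
  fixes A :: "'m::finite \<Rightarrow> real^'n^'n" and b :: "real^'m" and C :: "real^'n^'n"
    and \<sigma> :: real and Z :: "nat \<Rightarrow> real^'n^'n"
  assumes symA: "\<And>i. A i \<in> sym_mats"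
    and symC: "C \<in> sym_mats"
    and surj: "\<forall>c. \<exists>X\<in>sym_mats. Aop A X = c"
    and kkt: "kkt_set A b C \<noteq> {}"
    and sigma: "\<sigma> > 0"
    and Z0: "Z 0 \<in> sym_mats"
    and Zstep: "\<And>k. Z (Suc k) = admm_step A b C \<sigma> (Z k)"
  shows "\<forall>k. (\<forall>Xt\<in>sym_mats. Aop A Xt = b \<longrightarrow>
            (norm (Z (Suc k) - Z k))\<^sup>2 =
              (norm (Pop A (proj_psd (Z k) - Xt)))\<^sup>2
              + \<sigma>\<^sup>2 * (norm (Pperp A ((1 / \<sigma>) *\<^sub>R proj_psd (- Z k) - C)))\<^sup>2)
         \<and> (norm (Z (Suc k) - Z k))\<^sup>2
             \<le> (infdist (Z k) (admm_fixpoints A b C \<sigma>))\<^sup>2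
               - (infdist (Z (Suc k)) (admm_fixpoints A b C \<sigma>))\<^sup>2"
proof
  fix k
  have symZ: "Z k \<in> sym_mats" for k
    by (induction k) (use Z0 step_sym[OF symA symC] Zstep in auto)
  let ?F = "admm_fixpoints A b C \<sigma>"
  let ?D = "(norm (Z (Suc k) - Z k))\<^sup>2"
  have F: "?F \<noteq> {}" by (rule fix_nonempty[OF surj kkt sigma])
  have "sqrt ((infdist (Z (Suc k)) ?F)^2 + ?D) \<le> infdist (Z k) ?F"
    unfolding infdist_notempty[OF F, of "Z k"]
  proof (rule cINF_greatest[OF F])
    fix zs assume zs: "zs \<in> ?F"
    have "(infdist (Z (Suc k)) ?F)^2 \<le> (dist (Z (Suc k)) zs)^2"
      using power_mono[OF infdist_le[OF zs, of "Z (Suc k)"] infdist_nonneg, of 2] by simp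
    also have "\<dots> \<le> (norm (Z k - zs))^2 - ?D"
      using fix_ineq[OF surj zs, of "Z k"] unfolding Zstep[symmetric] by (simp add: dist_norm)
    finally have "(infdist (Z (Suc k)) ?F)^2 + ?D \<le> (dist (Z k) zs)^2" by (simp add: dist_norm)
    then show "sqrt ((infdist (Z (Suc k)) ?F)^2 + ?D) \<le> dist (Z k) zs"
      using real_le_lsqrt zero_le_dist by (metis real_sqrt_le_mono real_sqrt_unique)
  qed
  note h = this
  have a0: "0 \<le> (infdist (Z (Suc k)) ?F)^2 + ?D" by simp
  have s0: "0 \<le> sqrt ((infdist (Z (Suc k)) ?F)^2 + ?D)" by (rule real_sqrt_ge_zero[OF a0])
  have "(sqrt ((infdist (Z (Suc k)) ?F)^2 + ?D))^2 \<le> (infdist (Z k) ?F)^2"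
    using power_mono[OF h s0] .
  then have "(infdist (Z (Suc k)) ?F)^2 + ?D \<le> (infdist (Z k) ?F)^2"
    unfolding real_sqrt_pow2[OF a0] .
  then have ineq: "?D \<le> (infdist (Z k) ?F)^2 - (infdist (Z (Suc k)) ?F)^2" by linarith
  have sk: "transpose (Z k) = Z k" using symZ[of k] by (simp add: sym_mats_def)
  show "(\<forall>Xt\<in>sym_mats. Aop A Xt = b \<longrightarrow>
            (norm (Z (Suc k) - Z k))\<^sup>2 =
              (norm (Pop A (proj_psd (Z k) - Xt)))\<^sup>2
              + \<sigma>\<^sup>2 * (norm (Pperp A ((1 / \<sigma>) *\<^sub>R proj_psd (- Z k) - C)))\<^sup>2)
         \<and> ?D \<le> (infdist (Z k) ?F)^2 - (infdist (Z (Suc k)) ?F)^2"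
  proof (intro conjI ballI impI)
    fix Xt assume "Aop A Xt = b"
    show "(norm (Z (Suc k) - Z k))\<^sup>2 =
              (norm (Pop A (proj_psd (Z k) - Xt)))\<^sup>2
              + \<sigma>\<^sup>2 * (norm (Pperp A ((1 / \<sigma>) *\<^sub>R proj_psd (- Z k) - C)))\<^sup>2"
      unfolding Zstep[of k] by (rule part1[OF surj sk sigma \<open>Aop A Xt = b\<close>])
  next
    show "?D \<le> (infdist (Z k) ?F)^2 - (infdist (Z (Suc k)) ?F)^2" by (rule ineq)
  qed
qed

end
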